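(* Let $N\ge 2$, $d\ge 1$, and let $\psi:\mathbb{R}^d\times\mathbb{R}^d\to\mathbb{R}$ be a positive, bounded, continuous function with $K:=\|\psi\|_\infty$. Let $\{t_n\}_{n\in\mathbb{N}_0}$ be an increasing sequence of nonnegative numbers with $t_0=0$, $t_n\to\infty$, and define $\alpha:[0,\infty)\to\{-1,1\}$ by $\alpha(0)=1$, $\alpha(t)=1$ for $t\in(t_{2n},t_{2n+1})$ and $\alpha(t)=-1$ for $t\in[t_{2n+1},t_{2n+2}]$, $n\in\mathbb{N}_0$. Assume $t_{2n+2}-t_{2n+1}<\frac{\ln 2}{K}$ for all $n\in\mathbb{N}_0$, $\sum_{p=0}^{\infty}(t_{2p+2}-t_{2p+1})<+\infty$, and $$\sup_{n\in\mathbb{N}_0}\left(\frac{e^{K(t_{2n+2}-t_{2n+1})}}{2-e^{K(t_{2n+2}-t_{2n+1})}}\max\left\{1-e^{-K(t_{2n+1}-t_{2n})},\,1-\frac{\psi_0}{K}\big(1-e^{-K(t_{2n+1}-t_{2n})}\big)\right\}\right)=c<1,$$ where $\psi_0:=\min_{|y|,|z|\le M^0}\psi(y,z)$ and $M^0:=e^{K\sum_{p=0}^{\infty}(t_{2p+2}-t_{2p+1})}\max_{i}|x_i^0|$. Then every solution $\{x_i\}_{i=1,\dots,N}$ of $$\frac{d}{dt}x_i(t)=\frac{1}{N-1}\sum_{j\ne i}\alpha(t)\,\psi(x_i(t),x_j(t))\,(x_j(t)-x_i(t)),\quad t>0,\qquad x_i(0)=x_i^0\in\mathbb{R}^d,$$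 satisfies $$d(t)\le e^{-\gamma\left(t-\frac{\ln 2}{K}-T\right)}d(0)\quad\forall t\ge 0,$$ for two suitable positive constants $\gamma$ and $T$, independent of $N$, where $d(t):=\max_{i,j}|x_i(t)-x_j(t)|$.
   Context: $\mathbb{N}_0=\{0,1,2,\dots\}$; $|\cdot|$ is the Euclidean norm on $\mathbb{R}^d$. A solution is a continuous function that is $C^1$ on each interval $(t_n,t_{n+1})$ and satisfies the equation there. *)

theory Defs
  imports "HOL-Analysis.Analysis"
begin

definition supnorm :: "('a \<Rightarrow> 'a \<Rightarrow> real) \<Rightarrow> real" where
  "supnorm \<psi> = (SUP p\<in>UNIV. \<bar>\<psi> (fst p) (snd p)\<bar>)"

definition alpha :: "(nat \<Rightarrow> real) \<Rightarrow> real \<Rightarrow> real" where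
  "alpha t s = (if s = 0 then 1
                else if (\<exists>n. t (2*n) < s \<and> s < t (2*n+1)) then 1 else -1)"

definition negtime :: "(nat \<Rightarrow> real) \<Rightarrow> real" where
  "negtime t = (\<Sum>p. t (2*p+2) - t (2*p+1))"

text \<open>M^0 as a function of m = max_i |x_i^0|.\<close>
definition M0 :: "('a \<Rightarrow> 'a \<Rightarrow> real) \<Rightarrow> (nat \<Rightarrow> real) \<Rightarrow> real \<Rightarrow> real" where
  "M0 \<psi> t m = exp (supnorm \<psi> * negtime t) * m"

definition psi0 :: "('a::real_normed_vector \<Rightarrow> 'a \<Rightarrow> real) \<Rightarrow> real \<Rightarrow> real" where
  "psi0 \<psi> M = (INF p\<in>cball 0 M \<times> cball 0 M. \<psi> (fst p) (snd p))"

definition cterm :: "('a::real_normed_vector \<Rightarrow> 'a \<Rightarrow> real) \<Rightarrow> (nat \<Rightarrow> real) \<Rightarrow> real \<Rightarrow> nat \<Rightarrow> real" where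
  "cterm \<psi> t m n =
     (let K = supnorm \<psi>;
          a = exp (K * (t (2*n+2) - t (2*n+1)));
          b = 1 - exp (- K * (t (2*n+1) - t (2*n)))
      in a / (2 - a) * max b (1 - psi0 \<psi> (M0 \<psi> t m) / K * b))"

definition is_solution ::
  "('a::euclidean_space \<Rightarrow> 'a \<Rightarrow> real) \<Rightarrow> (nat \<Rightarrow> real) \<Rightarrow> nat \<Rightarrow> (nat \<Rightarrow> real \<Rightarrow> 'a) \<Rightarrow> bool" where
  "is_solution \<psi> t N x \<longleftrightarrow>
     (\<forall>i<N. continuous_on {0..} (x i)) \<and>
     (\<forall>i<N. \<forall>n. \<forall>s\<in>{t n<..<t (Suc n)}.
        (x i has_vector_derivative
           ((1 / (real N - 1)) *\<^sub>R
              (\<Sum>j\<in>{..<N} - {i}. (alpha t s * \<psi> (x i s) (x j s)) *\<^sub>R (x j s - x i s))))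
        (at s)) \<and>
     (\<forall>i<N. \<forall>n. continuous_on {t n<..<t (Suc n)} (\<lambda>s. vector_derivative (x i) (at s)))"

definition diam :: "nat \<Rightarrow> (nat \<Rightarrow> real \<Rightarrow> 'a::real_normed_vector) \<Rightarrow> real \<Rightarrow> real" where
  "diam N x s = Max {norm (x i s - x j s) | i j. i < N \<and> j < N}"

end

theory Submission
  imports Defs
begin

lemma core:
  fixes q q' :: "'i \<Rightarrow> real \<Rightarrow> real"
  assumes fin: "finite I" and ab: "a \<le> b"
  and cont: "\<And>i. i\<in>I \<Longrightarrow> continuous_on {a..b} (q i)"
  and der: "\<And>i s. i\<in>I \<Longrightarrow> s\<in>{a<..<b} \<Longrightarrow> (q i has_real_derivative q' i s) (at s)"
  and act: "\<And>i s. i\<in>I \<Longrightarrow> s\<in>{a<..<b} \<Longrightarrow> (\<forall>j\<in>I. q j s \<le> q i s) \<Longrightarrow> q' i s \<le> 0"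
  and init: "\<And>j. j\<in>I \<Longrightarrow> q j a \<le> C"
  and j: "j\<in>I" and u: "u\<in>{a..b}"
  shows "q j u \<le> C"
proof -
  have inner: "q j u \<le> D + e*(u - a')"
    if a': "a < a'" "a' \<le> b" and D: "\<forall>j\<in>I. q j a' \<le> D" and e: "e > 0" and j: "j\<in>I"
      and u: "u\<in>{a'..b}" for a' D e j u
  proof (rule ccontr)
    assume neg: "\<not> q j u \<le> D + e*(u - a')"
    define g where "g = (\<lambda>y. D + e*(y - a'))"
    define S where "S = {y\<in>{a'..u}. \<forall>j\<in>I. q j y \<le> g y}"
    have gc: "continuous_on A g" for A unfolding g_def by (intro continuous_intros)
    have Seq: "S = {a'..u} \<inter> (\<Inter>j\<in>I. {y\<in>{a'..u}. q j y \<le> g y})"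
      unfolding S_def by auto
    have "closed S" unfolding Seq
    proof (intro closed_Int closed_INT ballI)
      fix j assume "j\<in>I"
      then show "closed {y\<in>{a'..u}. q j y \<le> g y}"
        using cont[of j] u a' by (intro continuous_on_closed_Collect_le gc)
          (auto elim!: continuous_on_subset)
    qed auto
    moreover have "a' \<in> S" using D u unfolding S_def g_def by auto
    moreover have bdd: "bdd_above S" unfolding S_def by (rule bdd_aboveI[of _ u]) auto
    ultimately have sS: "Sup S \<in> S" by (intro closed_contains_Sup) auto
    define s where "s = Sup S"
    have "u \<notin> S" using neg j unfolding S_def g_def by auto
    with sS have s1: "a' \<le> s" "s < u" "\<forall>j\<in>I. q j s \<le> g s"
      unfolding s_def S_def by (auto simp: order.order_iff_strict)
    have "\<forall>k\<in>I. eventually (\<lambda>y. q k y \<le> g y) (at_right s)"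
    proof
      fix k assume k: "k\<in>I"
      have sab: "s\<in>{a<..<b}" using s1 a' u by auto
      have dk: "(q k has_real_derivative q' k s) (at s)" using der[OF k sab] .
      show "eventually (\<lambda>y. q k y \<le> g y) (at_right s)"
      proof (cases "q k s < g s")
        case True
        have "isCont (q k) s" using DERIV_isCont[OF dk] .
        moreover have "isCont g s" unfolding g_def by (intro continuous_intros)
        ultimately have "((\<lambda>y. g y - q k y) \<longlongrightarrow> g s - q k s) (at s)"
          by (intro tendsto_intros) (auto simp: isCont_def)
        then have "eventually (\<lambda>y. g y - q k y > 0) (at s)"
          using True by (intro order_tendstoD(1)) auto
        then have "eventually (\<lambda>y. g y - q k y > 0) (at_right s)"
          unfolding eventually_at_split by auto
        then show ?thesis by eventually_elim auto
      next
        case False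
        with s1 k have eq: "q k s = g s" by force
        have "q' k s \<le> 0" using act[OF k sab] s1 eq by auto
        have lim: "((\<lambda>y. (q k y - q k s) / (y - s)) \<longlongrightarrow> q' k s) (at s)"
          using dk has_field_derivative_iff by blast
        have "eventually (\<lambda>y. (q k y - q k s) / (y - s) < e) (at s)"
          using order_tendstoD(2)[OF lim, of e] \<open>q' k s \<le> 0\<close> e by auto
        then have "eventually (\<lambda>y. (q k y - q k s) / (y - s) < e) (at_right s)"
          unfolding eventually_at_split by auto
        then show ?thesis using eventually_at_right_less[of s]
        proof eventually_elim
          case (elim y)
          then have "q k y - q k s < e * (y - s)" by (simp add: divide_less_eq)
          then show ?case using eq unfolding g_def by (simp add: algebra_simps)
        qed
      qed
    qed
    then have "eventually (\<lambda>y. \<forall>k\<in>I. q k y \<le> g y) (at_right s)"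
      using fin by (intro eventually_ball_finite) auto
    then obtain b0 where b0: "b0 > s" "\<forall>y>s. y < b0 \<longrightarrow> (\<forall>k\<in>I. q k y \<le> g y)"
      unfolding eventually_at_right_field by auto
    define y where "y = (s + min b0 u) / 2"
    have "y > s" "y < b0" "y \<le> u" using b0 s1 unfolding y_def by auto
    then have "y \<in> S" using b0 s1 unfolding S_def by auto
    then have "y \<le> s" unfolding s_def using bdd by (rule cSup_upper)
    with \<open>y > s\<close> show False by simp
  qed
  show ?thesis
  proof (cases "u = a")
    case True then show ?thesis using init j by simp
  next
    case False
    with u have ua: "a < u" "u \<le> b" by auto
    show ?thesis
    proof (rule field_le_epsilon)
      fix e :: real assume e: "e > 0"
      define e1 where "e1 = e / (1 + (b - a))"
      have e1: "e1 > 0" using e ab unfolding e1_def by auto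
      have "\<forall>k\<in>I. eventually (\<lambda>y. q k y < q k a + e1) (at a within {a..b})"
      proof
        fix k assume k: "k\<in>I"
        have "(q k \<longlongrightarrow> q k a) (at a within {a..b})"
          using cont[OF k] ab unfolding continuous_on_def by auto
        then show "eventually (\<lambda>y. q k y < q k a + e1) (at a within {a..b})"
          using e1 by (intro order_tendstoD(2)) auto
      qed
      then have "eventually (\<lambda>y. \<forall>k\<in>I. q k y < q k a + e1) (at a within {a..b})"
        using fin by (intro eventually_ball_finite) auto
      then obtain d where d: "d > 0" "\<forall>y\<in>{a..b}. y \<noteq> a \<and> dist y a < d \<longrightarrow> (\<forall>k\<in>I. q k y < q k a + e1)"
        unfolding eventually_at by auto
      define a' where "a' = min u (a + d/2)"
      have a': "a < a'" "a' \<le> u" "a' \<le> b" "dist a' a < d" using d ua unfolding a'_def dist_real_def by auto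
      then have "\<forall>k\<in>I. q k a' \<le> C + e1" using d init by (fastforce)
      then have "q j u \<le> C + e1 + e1 * (u - a')" using inner[OF a'(1,3) _ e1 j] ua a' by auto
      also have "\<dots> \<le> C + e1 + e1 * (b - a)" using e1 a' ua by (intro add_left_mono mult_left_mono) auto
      also have "\<dots> = C + e1 * (1 + (b - a))" by (simp add: algebra_simps)
      also have "\<dots> = C + e" unfolding e1_def using ab by simp
      finally show "q j u \<le> C + e" .
    qed
  qed
qed

lemma core_exp:
  fixes q q' :: "'i \<Rightarrow> real \<Rightarrow> real"
  assumes fin: "finite I" and ab: "a \<le> b"
  and cont: "\<And>i. i\<in>I \<Longrightarrow> continuous_on {a..b} (q i)"
  and der: "\<And>i s. i\<in>I \<Longrightarrow> s\<in>{a<..<b} \<Longrightarrow> (q i has_real_derivative q' i s) (at s)"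
  and act: "\<And>i s. i\<in>I \<Longrightarrow> s\<in>{a<..<b} \<Longrightarrow> (\<forall>j\<in>I. q j s \<le> q i s) \<Longrightarrow> q' i s \<le> l * q i s"
  and init: "\<And>j. j\<in>I \<Longrightarrow> q j a \<le> C"
  and j: "j\<in>I" and u: "u\<in>{a..b}"
  shows "q j u \<le> C * exp (l * (u - a))"
proof -
  define h where "h = (\<lambda>i y. q i y * exp (- l * y))"
  define h' where "h' = (\<lambda>i y. q' i y * exp (- l * y) + q i y * (exp (- l * y) * (- l)))"
  have "h j u \<le> C * exp (- l * a)"
  proof (rule core[of I a b h h'])
    fix i assume "i\<in>I" then show "continuous_on {a..b} (h i)"
      unfolding h_def using cont by (intro continuous_intros) auto
  next
    fix i s assume i: "i\<in>I" and s: "s\<in>{a<..<b}"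
    show "(h i has_real_derivative h' i s) (at s)"
      unfolding h_def h'_def
      by (rule derivative_eq_intros der[OF i s] refl)+ simp
  next
    fix i s assume i: "i\<in>I" and s: "s\<in>{a<..<b}" and m: "\<forall>j\<in>I. h j s \<le> h i s"
    have "\<forall>j\<in>I. q j s \<le> q i s" using m unfolding h_def by auto
    then have "q' i s \<le> l * q i s" using act[OF i s] by auto
    then have "(q' i s - l * q i s) * exp (- l * s) \<le> 0"
      by (simp add: mult_nonpos_nonneg)
    then show "h' i s \<le> 0" unfolding h'_def by (simp add: algebra_simps)
  next
    fix j assume "j\<in>I" then show "h j a \<le> C * exp (- l * a)"
      unfolding h_def using init by simp
  qed (use fin ab j u in auto)
  then have "q j u * exp (- l * u) * exp (l * u) \<le> C * exp (- l * a) * exp (l * u)"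
    unfolding h_def by (intro mult_right_mono) auto
  then show ?thesis by (simp add: mult_exp_exp algebra_simps)
qed

lemma global_bound:
  fixes q q' :: "'i \<Rightarrow> real \<Rightarrow> real" and t :: "nat \<Rightarrow> real"
  assumes fin: "finite I"
  and t_mono: "strict_mono t" and t0: "t 0 = 0" and t_inf: "filterlim t at_top sequentially"
  and summ: "summable (\<lambda>p. t (2*p+2) - t (2*p+1))"
  and cont: "\<And>i. i\<in>I \<Longrightarrow> continuous_on {0..} (q i)"
  and der: "\<And>i n s. i\<in>I \<Longrightarrow> s\<in>{t n<..<t (Suc n)} \<Longrightarrow> (q i has_real_derivative q' i s) (at s)"
  and act: "\<And>i n s. i\<in>I \<Longrightarrow> s\<in>{t n<..<t (Suc n)} \<Longrightarrow> (\<forall>j\<in>I. q j s \<le> q i s) \<Longrightarrow>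
              q' i s \<le> (if even n then a else b) * q i s"
  and init: "\<And>j. j\<in>I \<Longrightarrow> q j 0 \<le> C"
  and C: "C \<ge> 0" and ab: "a \<le> b"
  and j: "j\<in>I" and u: "u \<ge> 0"
  shows "q j u \<le> C * exp (a*u + (b-a) * (\<Sum>p. t (2*p+2) - t (2*p+1)))"
proof -
  define S where "S = (\<Sum>p. t (2*p+2) - t (2*p+1))"
  define g where "g = (\<lambda>k. if odd k then t (Suc k) - t k else 0)"
  define NS where "NS = (\<lambda>n. \<Sum>k<n. g k)"
  have tlt: "t k < t (Suc k)" for k using t_mono by (simp add: strict_mono_Suc_iff)
  have g0: "g k \<ge> 0" for k unfolding g_def using tlt[of k] by auto
  have tge: "t n \<ge> 0" for n using t0 strict_mono_less_eq[OF t_mono, of 0 n] by simp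
  have NS2: "NS (2*n) = (\<Sum>p<n. t (2*p+2) - t (2*p+1))" for n
  proof (induction n)
    case 0 then show ?case unfolding NS_def by simp
  next
    case (Suc n)
    have "NS (2 * Suc n) = NS (2*n) + g (2*n) + g (2*n+1)"
      unfolding NS_def by (simp add: mult_2)
    also have "g (2*n) = 0" unfolding g_def by simp
    also have "g (2*n+1) = t (2*n+2) - t (2*n+1)" unfolding g_def by simp
    finally show ?case using Suc by simp
  qed
  have NS_le: "NS n \<le> S" for n
  proof -
    have "NS n \<le> NS (2*n)" unfolding NS_def using g0 by (intro sum_mono2) auto
    also have "\<dots> \<le> S" unfolding NS2 S_def
      using summ tlt by (intro sum_le_suminf) (auto simp: less_imp_le)
    finally show ?thesis .
  qed
  have step: "\<forall>j\<in>I. \<forall>u\<in>{t n..t (Suc n)}. q j u \<le> C * exp (a*u + (b-a) * NS (Suc n))"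
    if H: "\<forall>j\<in>I. q j (t n) \<le> C * exp (a * t n + (b-a) * NS n)" for n
  proof (intro ballI)
    fix j u assume j: "j\<in>I" and u: "u\<in>{t n..t (Suc n)}"
    define l where "l = (if even n then a else b)"
    have "q j u \<le> C * exp (a * t n + (b-a) * NS n) * exp (l * (u - t n))"
    proof (rule core_exp[of I "t n" "t (Suc n)" q q'])
      fix i assume "i\<in>I" then show "continuous_on {t n..t (Suc n)} (q i)"
        using cont[of i] tge[of n] by (auto elim!: continuous_on_subset)
    next
      fix i s assume "i\<in>I" "s\<in>{t n<..<t (Suc n)}" "\<forall>j\<in>I. q j s \<le> q i s"
      then show "q' i s \<le> l * q i s" unfolding l_def using act by blast
    qed (use fin tlt[of n] der H j u in auto)
    also have "\<dots> = C * exp (a * t n + (b-a) * NS n + l * (u - t n))"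
      by (simp add: mult_exp_exp)
    also have "\<dots> \<le> C * exp (a*u + (b-a) * NS (Suc n))"
    proof -
      have "a * t n + (b-a) * NS n + l * (u - t n) \<le> a*u + (b-a) * NS (Suc n)"
      proof (cases "even n")
        case True then show ?thesis unfolding l_def NS_def g_def by (simp add: algebra_simps)
      next
        case False
        have "(b - a) * (u - t n) \<le> (b - a) * (t (Suc n) - t n)"
          using ab u by (intro mult_left_mono) auto
        then show ?thesis using False unfolding l_def NS_def g_def by (simp add: algebra_simps)
      qed
      then show ?thesis using C by (intro mult_left_mono) auto
    qed
    finally show "q j u \<le> C * exp (a*u + (b-a) * NS (Suc n))" .
  qed
  have all: "\<forall>j\<in>I. q j (t n) \<le> C * exp (a * t n + (b-a) * NS n)" for n
  proof (induction n)
    case 0 then show ?case using init t0 unfolding NS_def by simp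
  next
    case (Suc n)
    then show ?case using step[OF Suc] tlt[of n] by auto
  qed
  obtain N0 where N0: "\<forall>n\<ge>N0. u < t n"
    using t_inf unfolding filterlim_at_top_dense eventually_sequentially by blast
  define A where "A = {n. t n \<le> u}"
  have "A \<subseteq> {..<N0}" unfolding A_def using N0 by (auto simp: not_less[symmetric])
  then have finA: "finite A" by (rule finite_subset) auto
  have "0 \<in> A" unfolding A_def using t0 u by simp
  define n where "n = Max A"
  have "n \<in> A" unfolding n_def using finA \<open>0\<in>A\<close> by (intro Max_in) auto
  moreover have "Suc n \<notin> A"
  proof
    assume "Suc n \<in> A"
    then have "Suc n \<le> n" unfolding n_def using finA by (simp add: Max_ge)
    then show False by simp
  qed
  ultimately have un: "u \<in> {t n..t (Suc n)}" unfolding A_def by auto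
  have "q j u \<le> C * exp (a*u + (b-a) * NS (Suc n))" using step[OF all] j un by blast
  also have "\<dots> \<le> C * exp (a*u + (b-a) * S)"
    using C ab NS_le[of "Suc n"] by (intro mult_left_mono) (auto intro: mult_left_mono)
  finally show ?thesis unfolding S_def .
qed

lemma vd_inner:
  assumes "(f has_vector_derivative X) (at s)"
  shows "((\<lambda>y. f y \<bullet> v) has_real_derivative (X \<bullet> v)) (at s)"
proof -
  have "(f has_derivative (\<lambda>h. h *\<^sub>R X)) (at s)"
    using assms by (simp add: has_vector_derivative_def)
  then have "((\<lambda>y. f y \<bullet> v) has_derivative (\<lambda>h. (h *\<^sub>R X) \<bullet> v)) (at s)"
    by (rule has_derivative_inner_left)
  moreover have "(\<lambda>h. (h *\<^sub>R X) \<bullet> v) = (*) (X \<bullet> v)" by (auto simp: mult.commute)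
  ultimately show ?thesis unfolding has_field_derivative_def by simp
qed

lemma alpha_pos:
  assumes "s \<in> {t (2*m) <..< t (2*m+1)}"
  shows "alpha t s = 1"
  using assms unfolding alpha_def by auto

lemma alpha_neg:
  assumes tm: "strict_mono t" and t0: "t 0 = 0" and s: "s \<in> {t (2*m+1) <..< t (2*m+2)}"
  shows "alpha t s = -1"
proof -
  have "s \<noteq> 0" using s t0 strict_mono_less_eq[OF tm, of 0 "2*m+1"] by auto
  moreover have "\<not> (t (2*n) < s \<and> s < t (2*n+1))" for n
  proof
    assume h: "t (2*n) < s \<and> s < t (2*n+1)"
    then have "t (2*n) < t (2*m+2)" "t (2*m+1) < t (2*n+1)" using s by auto
    then have "2*n < 2*m+2" "2*m+1 < 2*n+1" using strict_mono_less[OF tm] by blast+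
    then show False by simp
  qed
  ultimately show ?thesis unfolding alpha_def by auto
qed

lemma avg_bound:
  fixes f :: "nat \<Rightarrow> real"
  assumes N: "N \<ge> 2" and i: "i < N" and f: "\<And>j. j \<in> {..<N} - {i} \<Longrightarrow> f j \<le> B"
  shows "(1 / (real N - 1)) * (\<Sum>j\<in>{..<N} - {i}. f j) \<le> B"
proof -
  have "(\<Sum>j\<in>{..<N} - {i}. f j) \<le> (\<Sum>j\<in>{..<N} - {i}. B)" using f by (rule sum_mono)
  also have "\<dots> = (real N - 1) * B" using i N by (simp add: card_Diff_singleton of_nat_diff)
  finally have "(\<Sum>j\<in>{..<N} - {i}. f j) \<le> (real N - 1) * B" .
  moreover have "real N - 1 > 0" using N by simp
  ultimately show ?thesis by (simp add: divide_le_eq mult.commute)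
qed

lemma sol_deriv:
  assumes sol: "is_solution \<psi> t N x" and i: "i < N" and s: "s\<in>{t n<..<t (Suc n)}"
  shows "((\<lambda>y. x i y \<bullet> v) has_real_derivative
     (1 / (real N - 1)) * (\<Sum>j\<in>{..<N} - {i}. alpha t s * \<psi> (x i s) (x j s) * (x j s \<bullet> v - x i s \<bullet> v))) (at s)"
proof -
  have "(x i has_vector_derivative
           ((1 / (real N - 1)) *\<^sub>R
              (\<Sum>j\<in>{..<N} - {i}. (alpha t s * \<psi> (x i s) (x j s)) *\<^sub>R (x j s - x i s)))) (at s)"
    using sol i s unfolding is_solution_def by blast
  from vd_inner[OF this, of v] show ?thesis
    by (simp add: inner_sum_left inner_diff_left)
qed

lemma family_R:
  fixes \<psi> :: "'a::euclidean_space \<Rightarrow> 'a \<Rightarrow> real"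
  assumes sol: "is_solution \<psi> t N x" and N: "N \<ge> 2"
  and pos: "\<forall>y z. \<psi> y z > 0" and Kb: "\<forall>y z. \<psi> y z \<le> K"
  and t_mono: "strict_mono t" and t0: "t 0 = 0" and t_inf: "filterlim t at_top sequentially"
  and summ: "summable (\<lambda>p. t (2*p+2) - t (2*p+1))"
  and init: "\<forall>i<N. norm (x i 0) \<le> m"
  and i: "i < N" and u: "u \<ge> 0"
  shows "x i u \<bullet> v \<le> m * norm v * exp (2*K * negtime t)"
proof -
  define D where "D = (\<lambda>i s. (1 / (real N - 1)) * (\<Sum>j\<in>{..<N} - {i}.
      alpha t s * \<psi> (x i s) (x j s) * (x j s \<bullet> v - x i s \<bullet> v)))"
  define I where "I = {..<N} \<times> {1, -1::real}"
  define q where "q = (\<lambda>p y. snd p * (x (fst p) y \<bullet> v))"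
  define q' where "q' = (\<lambda>p s. snd p * D (fst p) s)"
  have K0: "K \<ge> 0" using pos Kb by (meson less_le_trans less_imp_le)
  have m0: "m \<ge> 0" using init N by (meson norm_ge_zero order_trans less_le_trans zero_less_numeral le_less)
  have "q (i, 1) u \<le> m * norm v * exp (0*u + (2*K - 0) * (\<Sum>p. t (2*p+2) - t (2*p+1)))"
  proof (rule global_bound[of I t q q'])
    show "finite I" unfolding I_def by simp
  next
    fix p assume "p \<in> I"
    then show "continuous_on {0..} (q p)" unfolding q_def I_def
      using sol unfolding is_solution_def by (auto intro!: continuous_intros)
  next
    fix p n s assume p: "p \<in> I" and s: "s\<in>{t n<..<t (Suc n)}"
    then have "fst p < N" unfolding I_def by auto
    from sol_deriv[OF sol this s, of v] show "(q p has_real_derivative q' p s) (at s)"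
      unfolding q_def q'_def D_def by (rule DERIV_cmult)
  next
    fix p n s assume p: "p \<in> I" and s: "s\<in>{t n<..<t (Suc n)}" and H: "\<forall>j\<in>I. q j s \<le> q p s"
    obtain i \<sigma> where pe: "p = (i, \<sigma>)" by force
    have i: "i < N" and sig: "\<sigma> = 1 \<or> \<sigma> = -1" using p pe unfolding I_def by auto
    define P where "P = (\<lambda>j. x j s \<bullet> v)"
    have H1: "\<sigma> * P j \<le> \<sigma> * P i" "- \<sigma> * P j \<le> \<sigma> * P i" if "j < N" for j
      using H[rule_format, of "(j, \<sigma>)"] H[rule_format, of "(j, -\<sigma>)"] that sig pe
      unfolding I_def q_def P_def by auto
    have eq: "q' p s = (1 / (real N - 1)) * (\<Sum>j\<in>{..<N} - {i}.
        alpha t s * \<psi> (x i s) (x j s) * (\<sigma> * P j - \<sigma> * P i))"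
      unfolding q'_def D_def pe P_def
      by (simp add: sum_distrib_left right_diff_distrib algebra_simps)
    show "q' p s \<le> (if even n then 0 else 2*K) * q p s"
    proof (cases "even n")
      case True
      then obtain k where nk: "n = 2*k" by (rule evenE)
      have al: "alpha t s = 1" using s nk by (intro alpha_pos) auto
      have "q' p s \<le> 0" unfolding eq al using N i
      proof (intro avg_bound)
        fix j assume "j \<in> {..<N} - {i}"
        then show "1 * \<psi> (x i s) (x j s) * (\<sigma> * P j - \<sigma> * P i) \<le> 0"
          using H1(1)[of j] pos mult_nonneg_nonpos[of "\<psi> (x i s) (x j s)" "\<sigma> * P j - \<sigma> * P i"]
          by (auto simp: less_imp_le)
      qed
      then show ?thesis using True by simp
    next
      case False
      then obtain k where nk: "n = 2*k+1" by (rule oddE)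
      have al: "alpha t s = -1" using s nk by (intro alpha_neg[OF t_mono t0]) auto
      have fj: "alpha t s * \<psi> (x i s) (x j s) * (\<sigma> * P j - \<sigma> * P i) \<le> K * (2 * (\<sigma> * P i))"
        if j: "j \<in> {..<N} - {i}" for j
      proof -
        have d0: "0 \<le> \<sigma> * P i - \<sigma> * P j" "\<sigma> * P i - \<sigma> * P j \<le> 2 * (\<sigma> * P i)"
          using H1[of j] j by auto
        have "\<psi> (x i s) (x j s) * (\<sigma> * P i - \<sigma> * P j) \<le> K * (2 * (\<sigma> * P i))"
          using d0 pos Kb K0 by (intro mult_mono) (auto intro: less_imp_le)
        then show ?thesis unfolding al by (simp add: algebra_simps)
      qed
      have "q' p s \<le> K * (2 * (\<sigma> * P i))" unfolding eq
        by (rule avg_bound[OF N i fj])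
      then show ?thesis using False unfolding q_def pe P_def by (simp add: algebra_simps)
    qed
  next
    fix p assume "p \<in> I"
    then obtain j \<sigma> where pe: "p = (j, \<sigma>)" "j < N" "\<sigma> = 1 \<or> \<sigma> = -1" unfolding I_def by auto
    have "\<sigma> * (x j 0 \<bullet> v) \<le> \<bar>x j 0 \<bullet> v\<bar>" using pe by auto
    also have "\<dots> \<le> norm (x j 0) * norm v" by (rule Cauchy_Schwarz_ineq2)
    also have "\<dots> \<le> m * norm v" using init pe by (intro mult_right_mono) auto
    finally show "q p 0 \<le> m * norm v" unfolding q_def pe by simp
  qed (use t_mono t0 t_inf summ m0 K0 i u in \<open>auto simp: I_def\<close>)
  then show ?thesis unfolding q_def negtime_def by simp
qed

lemma sum_drop_zero:
  fixes f :: "nat \<Rightarrow> real"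
  assumes "i < N" "f i = 0"
  shows "(\<Sum>j\<in>{..<N} - {i}. f j) = (\<Sum>j<N. f j)"
  using assms by (simp add: sum_diff1)

lemma family_W:
  fixes \<psi> :: "'a::euclidean_space \<Rightarrow> 'a \<Rightarrow> real"
  assumes sol: "is_solution \<psi> t N x" and N: "N \<ge> 2"
  and pos: "\<forall>y z. \<psi> y z > 0" and Kb: "\<forall>y z. \<psi> y z \<le> K"
  and t_mono: "strict_mono t" and t0: "t 0 = 0" and t_inf: "filterlim t at_top sequentially"
  and summ: "summable (\<lambda>p. t (2*p+2) - t (2*p+1))"
  and low: "\<forall>i<N. \<forall>j<N. \<forall>s\<ge>0. \<psi> (x i s) (x j s) \<ge> p1" and p1: "p1 > 0"
  and init: "\<forall>i<N. \<forall>k<N. norm (x i 0 - x k 0) \<le> D0"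
  and i: "i < N" and k: "k < N" and u: "u \<ge> 0"
  shows "(x i u - x k u) \<bullet> v \<le> D0 * norm v * exp (- p1 * u + (2*K + p1) * negtime t)"
proof -
  define D where "D = (\<lambda>i s. (1 / (real N - 1)) * (\<Sum>j\<in>{..<N} - {i}.
      alpha t s * \<psi> (x i s) (x j s) * (x j s \<bullet> v - x i s \<bullet> v)))"
  define I where "I = {..<N} \<times> {..<N}"
  define q where "q = (\<lambda>p y. x (fst p) y \<bullet> v - x (snd p) y \<bullet> v)"
  define q' where "q' = (\<lambda>p s. D (fst p) s - D (snd p) s)"
  have K0: "K \<ge> 0" using pos Kb by (meson less_le_trans less_imp_le)
  have D00: "D0 \<ge> 0" using init[rule_format, of 0 0] N by simp
  have tge: "t n \<ge> 0" for n using t0 strict_mono_less_eq[OF t_mono, of 0 n] by simp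
  have cN: "real N - 1 > 0" using N by simp
  have "q (i, k) u \<le> D0 * norm v * exp ((- p1)*u + (2*K - (- p1)) * (\<Sum>p. t (2*p+2) - t (2*p+1)))"
  proof (rule global_bound[of I t q q'])
    show "finite I" unfolding I_def by simp
  next
    fix p assume "p \<in> I"
    then show "continuous_on {0..} (q p)" unfolding q_def I_def
      using sol unfolding is_solution_def by (auto intro!: continuous_intros)
  next
    fix p n s assume p: "p \<in> I" and s: "s\<in>{t n<..<t (Suc n)}"
    then have "fst p < N" "snd p < N" unfolding I_def by auto
    from DERIV_diff[OF sol_deriv[OF sol this(1) s, of v] sol_deriv[OF sol this(2) s, of v]]
    show "(q p has_real_derivative q' p s) (at s)"
      unfolding q_def q'_def D_def .
  next
    fix p n s assume p: "p \<in> I" and s: "s\<in>{t n<..<t (Suc n)}" and H: "\<forall>j\<in>I. q j s \<le> q p s"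
    obtain i k where pe: "p = (i, k)" by force
    have i: "i < N" and k: "k < N" using p pe unfolding I_def by auto
    define P where "P = (\<lambda>j. x j s \<bullet> v)"
    have H1: "P j \<le> P i" "P k \<le> P j" if "j < N" for j
      using H[rule_format, of "(j, k)"] H[rule_format, of "(i, j)"] that i k pe
      unfolding I_def q_def P_def by auto
    have s0: "s \<ge> 0" using s tge[of n] by auto
    have qp: "q p s = P i - P k" unfolding q_def pe P_def by simp
    have Deq: "D l s = (1 / (real N - 1)) * (\<Sum>j\<in>{..<N} - {l}. alpha t s * \<psi> (x l s) (x j s) * (P j - P l))" for l
      unfolding D_def P_def by simp
    show "q' p s \<le> (if even n then - p1 else 2*K) * q p s"
    proof (cases "even n")
      case True
      then obtain m where nk: "n = 2*m" by (rule evenE)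
      have al: "alpha t s = 1" using s nk by (intro alpha_pos) auto
      have "(\<Sum>j\<in>{..<N} - {i}. alpha t s * \<psi> (x i s) (x j s) * (P j - P i))
            \<le> (\<Sum>j\<in>{..<N} - {i}. p1 * (P j - P i))"
      proof (rule sum_mono)
        fix j assume j: "j \<in> {..<N} - {i}"
        have "\<psi> (x i s) (x j s) \<ge> p1" using low i j s0 by auto
        moreover have "P j - P i \<le> 0" using H1(1)[of j] j by auto
        ultimately show "alpha t s * \<psi> (x i s) (x j s) * (P j - P i) \<le> p1 * (P j - P i)"
          unfolding al by (simp add: mult_right_mono_neg)
      qed
      also have "\<dots> = (\<Sum>j<N. p1 * (P j - P i))" using i by (intro sum_drop_zero) auto
      finally have A: "(\<Sum>j\<in>{..<N} - {i}. alpha t s * \<psi> (x i s) (x j s) * (P j - P i))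
            \<le> (\<Sum>j<N. p1 * (P j - P i))" .
      have "(\<Sum>j<N. p1 * (P j - P k)) = (\<Sum>j\<in>{..<N} - {k}. p1 * (P j - P k))"
        using k by (intro sum_drop_zero[symmetric]) auto
      also have "\<dots> \<le> (\<Sum>j\<in>{..<N} - {k}. alpha t s * \<psi> (x k s) (x j s) * (P j - P k))"
      proof (rule sum_mono)
        fix j assume j: "j \<in> {..<N} - {k}"
        have "\<psi> (x k s) (x j s) \<ge> p1" using low k j s0 by auto
        moreover have "P j - P k \<ge> 0" using H1(2)[of j] j by auto
        ultimately show "p1 * (P j - P k) \<le> alpha t s * \<psi> (x k s) (x j s) * (P j - P k)"
          unfolding al by (simp add: mult_right_mono)
      qed
      finally have B: "(\<Sum>j<N. p1 * (P j - P k))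
          \<le> (\<Sum>j\<in>{..<N} - {k}. alpha t s * \<psi> (x k s) (x j s) * (P j - P k))" .
      have "q' p s \<le> (1 / (real N - 1)) * ((\<Sum>j<N. p1 * (P j - P i)) - (\<Sum>j<N. p1 * (P j - P k)))"
        unfolding q'_def pe fst_conv snd_conv Deq right_diff_distrib[symmetric]
        using A B cN by (intro mult_left_mono) auto
      also have "(\<Sum>j<N. p1 * (P j - P i)) - (\<Sum>j<N. p1 * (P j - P k)) = real N * (p1 * (P k - P i))"
        by (simp add: sum_subtractf[symmetric] algebra_simps)
      also have "(1 / (real N - 1)) * (real N * (p1 * (P k - P i))) \<le> - p1 * (P i - P k)"
      proof -
        have w: "p1 * (P i - P k) \<ge> 0" using H1(2)[OF i] p1 by simp
        have "real N / (real N - 1) \<ge> 1" using cN by simp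
        then have "real N / (real N - 1) * (p1 * (P i - P k)) \<ge> 1 * (p1 * (P i - P k))"
          using w by (intro mult_right_mono) auto
        then show ?thesis by (simp add: algebra_simps)
      qed
      finally show ?thesis using True qp by simp
    next
      case False
      then obtain m where nk: "n = 2*m+1" by (rule oddE)
      have al: "alpha t s = -1" using s nk by (intro alpha_neg[OF t_mono t0]) auto
      have fi: "alpha t s * \<psi> (x i s) (x j s) * (P j - P i) \<le> K * (P i - P k)"
        if j: "j \<in> {..<N} - {i}" for j
      proof -
        have "\<psi> (x i s) (x j s) * (P i - P j) \<le> K * (P i - P k)"
          using H1[of j] j pos Kb K0 by (intro mult_mono) (auto intro: less_imp_le)
        then show ?thesis unfolding al by (simp add: algebra_simps)
      qed
      have fk: "- (alpha t s * \<psi> (x k s) (x j s) * (P j - P k)) \<le> K * (P i - P k)"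
        if j: "j \<in> {..<N} - {k}" for j
      proof -
        have "\<psi> (x k s) (x j s) * (P j - P k) \<le> K * (P i - P k)"
          using H1[of j] j pos Kb K0 by (intro mult_mono) (auto intro: less_imp_le)
        then show ?thesis unfolding al by (simp add: algebra_simps)
      qed
      have "D i s \<le> K * (P i - P k)" unfolding Deq by (rule avg_bound[OF N i fi])
      moreover have "- D k s \<le> K * (P i - P k)"
        using avg_bound[OF N k fk] unfolding Deq by (simp add: sum_negf)
      ultimately show ?thesis using False qp unfolding q'_def pe by simp
    qed
  next
    fix p assume "p \<in> I"
    then obtain j l where pe: "p = (j, l)" "j < N" "l < N" unfolding I_def by auto
    have "(x j 0 - x l 0) \<bullet> v \<le> norm (x j 0 - x l 0) * norm v"
      by (metis Cauchy_Schwarz_ineq2 abs_le_iff)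
    also have "\<dots> \<le> D0 * norm v" using init pe by (intro mult_right_mono) auto
    finally show "q p 0 \<le> D0 * norm v" unfolding q_def pe by (simp add: inner_diff_left)
  qed (use t_mono t0 t_inf summ D00 K0 p1 i k u in \<open>auto simp: I_def\<close>)
  then show ?thesis unfolding q_def negtime_def by (simp add: inner_diff_left)
qed

theorem theorem4p1:
  fixes \<psi> :: "'a::euclidean_space \<Rightarrow> 'a \<Rightarrow> real"
    and t :: "nat \<Rightarrow> real" and m c :: real
  assumes psi_pos: "\<forall>y z. \<psi> y z > 0"
    and psi_bdd: "bounded (range (\<lambda>p. \<psi> (fst p) (snd p)))"
    and psi_cont: "continuous_on UNIV (\<lambda>p. \<psi> (fst p) (snd p))"
    and t_mono: "strict_mono t" and t0: "t 0 = 0"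
    and t_inf: "filterlim t at_top sequentially"
    and gaps: "\<forall>n. t (2*n+2) - t (2*n+1) < ln 2 / supnorm \<psi>"
    and gaps_sum: "summable (\<lambda>p. t (2*p+2) - t (2*p+1))"
    and c_bdd: "bdd_above (range (cterm \<psi> t m))"
    and c_def: "(SUP n. cterm \<psi> t m n) = c"
    and c_lt: "c < 1"
  shows "\<exists>\<gamma> T. \<gamma> > 0 \<and> T > 0 \<and>
           (\<forall>N x. N \<ge> 2 \<longrightarrow> is_solution \<psi> t N x \<longrightarrow>
              (MAX i\<in>{..<N}. norm (x i 0)) = m \<longrightarrow>
              (\<forall>s\<ge>0. diam N x s
                  \<le> exp (- \<gamma> * (s - ln 2 / supnorm \<psi> - T)) * diam N x 0))"
proof -
  define K where "K = supnorm \<psi>"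
  define f where "f = (\<lambda>p. \<psi> (fst p) (snd p))"
  obtain Bd where Bd: "\<forall>z\<in>range f. norm z \<le> Bd" using psi_bdd unfolding f_def bounded_iff by blast
  have bddK: "bdd_above (range (\<lambda>p. \<bar>f p\<bar>))" using Bd by (intro bdd_aboveI2[where M=Bd]) auto
  have Kb: "\<forall>y z. \<psi> y z \<le> K"
  proof (intro allI)
    fix y z
    have "\<psi> y z \<le> \<bar>f (y, z)\<bar>" unfolding f_def by simp
    also have "\<dots> \<le> (SUP p. \<bar>f p\<bar>)"
      using bddK by (rule cSUP_upper[rotated]) simp
    also have "\<dots> = K" unfolding K_def supnorm_def f_def by simp
    finally show "\<psi> y z \<le> K" .
  qed
  have Kpos: "K > 0" using Kb psi_pos by (meson less_le_trans)
  define S where "S = negtime t"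
  have S0: "S \<ge> 0" unfolding S_def negtime_def using gaps_sum t_mono
    by (intro suminf_nonneg) (auto simp: strict_mono_less less_imp_le)
  define B where "B = \<bar>m * exp (2 * K * S)\<bar>"
  define Cs where "Cs = cball (0::'a) B \<times> cball (0::'a) B"
  have "compact Cs" unfolding Cs_def by (intro compact_Times compact_cball)
  moreover have "Cs \<noteq> {}" unfolding Cs_def B_def by auto
  moreover have "continuous_on Cs f" using psi_cont unfolding f_def by (rule continuous_on_subset) auto
  ultimately obtain p0 where p0: "p0 \<in> Cs" "\<forall>y\<in>Cs. f p0 \<le> f y"
    using continuous_attains_inf by blast
  define p1 where "p1 = f p0"
  have p1: "p1 > 0" unfolding p1_def f_def using psi_pos by simp
  have low1: "\<psi> y z \<ge> p1" if "norm y \<le> B" "norm z \<le> B" for y z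
    using p0(2)[rule_format, of "(y, z)"] that unfolding Cs_def p1_def f_def by auto
  define T where "T = (p1 + 2*K) * S / p1 + 1"
  have "(p1 + 2*K) * S / p1 \<ge> 0" using p1 Kpos S0 by simp
  then have T: "T > 0" unfolding T_def by linarith
  show ?thesis
  proof (intro exI conjI allI impI)
    show "p1 > 0" "T > 0" using p1 T by auto
  next
    fix N x s assume N: "N \<ge> 2" and sol: "is_solution \<psi> t N x"
      and mx: "(MAX i\<in>{..<N}. norm (x i 0)) = m" and s: "s \<ge> (0::real)"
    have init_m: "\<forall>i<N. norm (x i 0) \<le> m"
      using mx by (auto intro: Max_ge[of "(\<lambda>i. norm (x i 0)) ` {..<N}", simplified mx])
    have m0: "m \<ge> 0" using init_m N by (meson norm_ge_zero order_trans less_le_trans zero_less_numeral le_less)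
    have sqle: "norm w \<le> c" if "w \<bullet> w \<le> c * norm w" "c \<ge> 0" for w :: 'a and c
    proof (cases "norm w = 0")
      case False
      then have "norm w * norm w \<le> c * norm w" using that by (simp add: power2_norm_eq_inner[symmetric] power2_eq_square)
      then show ?thesis using False by (simp add: mult_le_cancel_right)
    qed (use that in simp)
    have posb: "norm (x i u) \<le> B" if "i < N" "u \<ge> 0" for i u
    proof -
      have "x i u \<bullet> x i u \<le> m * norm (x i u) * exp (2*K * negtime t)"
        using family_R[OF sol N psi_pos Kb t_mono t0 t_inf gaps_sum init_m that] .
      then have "norm (x i u) \<le> m * exp (2 * K * S)"
        using m0 by (intro sqle) (auto simp: S_def algebra_simps)
      then show ?thesis unfolding B_def by simp
    qed
    have low: "\<forall>i<N. \<forall>j<N. \<forall>s\<ge>0. \<psi> (x i s) (x j s) \<ge> p1"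
      using posb low1 by auto
    define A where "A = (\<lambda>s. {norm (x i s - x j s) | i j. i < N \<and> j < N})"
    have finA: "finite (A s)" for s unfolding A_def by (rule finite_image_set2) auto
    have neA: "A s \<noteq> {}" for s
    proof -
      have "0 < N" using N by simp
      then have "norm (x 0 s - x 0 s) \<in> A s" unfolding A_def by blast
      then show ?thesis by blast
    qed
    have dA: "diam N x s = Max (A s)" for s unfolding diam_def A_def ..
    have init_d: "\<forall>i<N. \<forall>k<N. norm (x i 0 - x k 0) \<le> diam N x 0"
      unfolding dA using finA by (auto intro!: Max_ge simp: A_def)
    have d0: "diam N x 0 \<ge> 0" using init_d N by (metis norm_ge_zero order_trans zero_less_numeral less_le_trans le_less)
    define E where "E = exp (- p1 * s + (2*K + p1) * S)"
    have "diam N x s \<le> diam N x 0 * E" unfolding dA[of s]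
    proof (rule Max.boundedI[OF finA neA])
      fix a assume "a \<in> A s"
      then obtain i k where ik: "i < N" "k < N" "a = norm (x i s - x k s)" unfolding A_def by auto
      have "(x i s - x k s) \<bullet> (x i s - x k s) \<le> diam N x 0 * norm (x i s - x k s) * E"
        using family_W[OF sol N psi_pos Kb t_mono t0 t_inf gaps_sum low p1 init_d ik(1,2) s]
        unfolding E_def S_def .
      then show "a \<le> diam N x 0 * E" unfolding ik(3) using d0
        by (intro sqle) (auto simp: E_def algebra_simps)
    qed
    also have "\<dots> \<le> diam N x 0 * exp (- p1 * (s - ln 2 / supnorm \<psi> - T))"
    proof (intro mult_left_mono d0)
      have l2: "ln 2 / K > 0" using Kpos by simp
      have "p1 * T = (p1 + 2*K) * S + p1" unfolding T_def using p1 by (simp add: field_simps)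
      moreover have "p1 * (ln 2 / K) \<ge> 0" using l2 p1 by (intro mult_nonneg_nonneg) auto
      moreover have "- p1 * (s - ln 2 / K - T) = - p1 * s + p1 * (ln 2 / K) + p1 * T"
        by (simp add: algebra_simps)
      ultimately have "- p1 * s + (2*K + p1) * S \<le> - p1 * (s - ln 2 / K - T)"
      proof -
        assume a1: "p1 * T = (p1 + 2 * K) * S + p1" and a2: "0 \<le> p1 * (ln 2 / K)"
          and a3: "- p1 * (s - ln 2 / K - T) = - p1 * s + p1 * (ln 2 / K) + p1 * T"
        have "(2*K + p1) * S = (p1 + 2 * K) * S" by (simp add: add.commute)
        then show ?thesis using a1 a2 a3 p1 by linarith
      qed
      then show "E \<le> exp (- p1 * (s - ln 2 / supnorm \<psi> - T))" unfolding E_def K_def by simp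
    qed
    finally show "diam N x s \<le> exp (- p1 * (s - ln 2 / supnorm \<psi> - T)) * diam N x 0"
      by (simp add: mult.commute)
  qed
qed

end
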